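(* Let $J$ be a cone with joins. Then: (a) $(x+y)\wedge z\le x\wedge z+y\wedge z$ for all $x,y,z\in J$; (b) if $x+y=z+w$ then $x+y=x\vee z+y\wedge w$; in particular $x+y=x\vee y+x\wedge y$ for all $x,y\in J$; (c) for every family $(x_i)\subset J$ and $y\in J$: $\sup_i(x_i\wedge y)\le(\sup_ix_i)\wedge y\le\sup_i(x_i\wedge y)+\varepsilon(y\vee\sup_ix_i)$; (d) if $v_1+v_2=w_1+w_2$ then there are $z_{ij}\in J$, $i,j=1,2$, with $z_{11}+z_{12}=v_1$, $z_{21}+z_{22}=v_2+\varepsilon v_1$, $z_{11}+z_{21}=w_1$, $z_{12}+z_{22}=w_2+\varepsilon w_1$; (e) if $v_1+v_2=w_1+w_2$ then there are $z_{ij}\in J$, $i,j=1,2$, with $z_{11}+z_{12}=v_1$, $z_{21}+z_{22}=v_2$, $z_{11}+z_{21}+\varepsilon w_2\ge w_1$, $z_{12}+z_{22}+\varepsilon w_1\ge w_2$.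
   Context: A prewedge is a set $W$ with a commutative associative addition with neutral element $0$ and a multiplication $[0,\infty)\times W\to W$ such that $\lambda(\eta v)=(\lambda\eta)v$, $0v=0$, $1v=v$, $(\lambda+\eta)v=\lambda v+\eta v$, $\lambda(v+w)=\lambda v+\lambda w$; it carries the preorder $v\le w$ iff $v+z=w$ for some $z$. A wedge is a prewedge in which $\le$ is antisymmetric and $v=\sup_{\eta<1}\eta v$ for every $v$. A cone is a wedge in which every directed subset (a subset in which every finite subset, including the empty one, has an upper bound in the subset) has a supremum. A cone with joins is a cone $J$ in which every subset $A$ has an infimum and $\inf(v+A)=v+\inf A$ for all $v\in J$, $A\subset J$, where $v+A=\{v+a:a\in A\}$; it is a complete lattice, and $\vee,\wedge$ denote the supremum and infimum of two elements. For $v$ in a cone, $\varepsilon v:=\inf\{\lambda v:\lambda>0\}$ (the part at infinity of $v$). *)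

theory Defs
  imports Complex_Main
begin

text \<open>A cone with joins is represented by its carrier type 'a together with
an addition, a zero and a multiplication by nonnegative reals (values of the
scalar multiplication at negative scalars are irrelevant).\<close>

definition prewedge :: "('a \<Rightarrow> 'a \<Rightarrow> 'a) \<Rightarrow> 'a \<Rightarrow> (real \<Rightarrow> 'a \<Rightarrow> 'a) \<Rightarrow> bool" where
  "prewedge add zero smul \<longleftrightarrow>
     (\<forall>u v. add u v = add v u) \<and>
     (\<forall>u v w. add (add u v) w = add u (add v w)) \<and>
     (\<forall>v. add zero v = v) \<and>
     (\<forall>l e v. 0 \<le> l \<longrightarrow> 0 \<le> e \<longrightarrow> smul l (smul e v) = smul (l * e) v) \<and>
     (\<forall>v. smul 0 v = zero) \<and>
     (\<forall>v. smul 1 v = v) \<and>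
     (\<forall>l e v. 0 \<le> l \<longrightarrow> 0 \<le> e \<longrightarrow> smul (l + e) v = add (smul l v) (smul e v)) \<and>
     (\<forall>l v w. 0 \<le> l \<longrightarrow> smul l (add v w) = add (smul l v) (smul l w))"

definition cle :: "('a \<Rightarrow> 'a \<Rightarrow> 'a) \<Rightarrow> 'a \<Rightarrow> 'a \<Rightarrow> bool" where
  "cle add v w \<longleftrightarrow> (\<exists>z. add v z = w)"

definition is_csup :: "('a \<Rightarrow> 'a \<Rightarrow> 'a) \<Rightarrow> 'a set \<Rightarrow> 'a \<Rightarrow> bool" where
  "is_csup add A s \<longleftrightarrow> (\<forall>a\<in>A. cle add a s) \<and> (\<forall>u. (\<forall>a\<in>A. cle add a u) \<longrightarrow> cle add s u)"

definition is_cinf :: "('a \<Rightarrow> 'a \<Rightarrow> 'a) \<Rightarrow> 'a set \<Rightarrow> 'a \<Rightarrow> bool" where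
  "is_cinf add A i \<longleftrightarrow> (\<forall>a\<in>A. cle add i a) \<and> (\<forall>u. (\<forall>a\<in>A. cle add u a) \<longrightarrow> cle add u i)"

definition wedge :: "('a \<Rightarrow> 'a \<Rightarrow> 'a) \<Rightarrow> 'a \<Rightarrow> (real \<Rightarrow> 'a \<Rightarrow> 'a) \<Rightarrow> bool" where
  "wedge add zero smul \<longleftrightarrow> prewedge add zero smul \<and>
     (\<forall>v w. cle add v w \<longrightarrow> cle add w v \<longrightarrow> v = w) \<and>
     (\<forall>v. is_csup add {smul e v | e. 0 \<le> e \<and> e < 1} v)"

text \<open>Directed: every finite subset (including the empty one) has an upper bound in the set.\<close>
definition cdirected :: "('a \<Rightarrow> 'a \<Rightarrow> 'a) \<Rightarrow> 'a set \<Rightarrow> bool" where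
  "cdirected add D \<longleftrightarrow> (\<forall>F. finite F \<longrightarrow> F \<subseteq> D \<longrightarrow> (\<exists>u\<in>D. \<forall>f\<in>F. cle add f u))"

definition cone :: "('a \<Rightarrow> 'a \<Rightarrow> 'a) \<Rightarrow> 'a \<Rightarrow> (real \<Rightarrow> 'a \<Rightarrow> 'a) \<Rightarrow> bool" where
  "cone add zero smul \<longleftrightarrow> wedge add zero smul \<and>
     (\<forall>D. cdirected add D \<longrightarrow> (\<exists>s. is_csup add D s))"

definition cInf :: "('a \<Rightarrow> 'a \<Rightarrow> 'a) \<Rightarrow> 'a set \<Rightarrow> 'a" where
  "cInf add A = (THE i. is_cinf add A i)"

definition cSup :: "('a \<Rightarrow> 'a \<Rightarrow> 'a) \<Rightarrow> 'a set \<Rightarrow> 'a" where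
  "cSup add A = (THE s. is_csup add A s)"

definition cone_with_joins :: "('a \<Rightarrow> 'a \<Rightarrow> 'a) \<Rightarrow> 'a \<Rightarrow> (real \<Rightarrow> 'a \<Rightarrow> 'a) \<Rightarrow> bool" where
  "cone_with_joins add zero smul \<longleftrightarrow> cone add zero smul \<and>
     (\<forall>A. \<exists>i. is_cinf add A i) \<and>
     (\<forall>v A. cInf add ((\<lambda>a. add v a) ` A) = add v (cInf add A))"

definition cmeet :: "('a \<Rightarrow> 'a \<Rightarrow> 'a) \<Rightarrow> 'a \<Rightarrow> 'a \<Rightarrow> 'a" where
  "cmeet add x y = cInf add {x, y}"

definition cjoin :: "('a \<Rightarrow> 'a \<Rightarrow> 'a) \<Rightarrow> 'a \<Rightarrow> 'a \<Rightarrow> 'a" where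
  "cjoin add x y = cSup add {x, y}"

definition ceps :: "('a \<Rightarrow> 'a \<Rightarrow> 'a) \<Rightarrow> (real \<Rightarrow> 'a \<Rightarrow> 'a) \<Rightarrow> 'a \<Rightarrow> 'a" where
  "ceps add smul v = cInf add {smul l v | l. 0 < l}"

end

theory Submission
  imports Defs
begin


locale cwj =
  fixes add :: "'a \<Rightarrow> 'a \<Rightarrow> 'a" and zero :: 'a and smul :: "real \<Rightarrow> 'a \<Rightarrow> 'a"
  assumes J: "cone_with_joins add zero smul"
begin

lemma pw: "prewedge add zero smul" using J unfolding cone_with_joins_def cone_def wedge_def by auto
lemma comm: "add u v = add v u" using pw unfolding prewedge_def by auto
lemma assoc: "add (add u v) w = add u (add v w)" using pw unfolding prewedge_def by auto
lemma zero_l: "add zero v = v" using pw unfolding prewedge_def by auto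
lemma smul_smul: "0 \<le> l \<Longrightarrow> 0 \<le> e \<Longrightarrow> smul l (smul e v) = smul (l * e) v"
  using pw unfolding prewedge_def by auto
lemma smul0: "smul 0 v = zero" using pw unfolding prewedge_def by auto
lemma smul1: "smul 1 v = v" using pw unfolding prewedge_def by auto
lemma smul_distr: "0 \<le> l \<Longrightarrow> 0 \<le> e \<Longrightarrow> smul (l + e) v = add (smul l v) (smul e v)"
  using pw unfolding prewedge_def by auto
lemma smul_add: "0 \<le> l \<Longrightarrow> smul l (add v w) = add (smul l v) (smul l w)"
  using pw unfolding prewedge_def by auto
lemma antisym: "cle add v w \<Longrightarrow> cle add w v \<Longrightarrow> v = w"
  using J unfolding cone_with_joins_def cone_def wedge_def by auto
lemma wsup: "is_csup add {smul e v | e. 0 \<le> e \<and> e < 1} v"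
  using J unfolding cone_with_joins_def cone_def wedge_def by auto
lemma infex: "\<exists>i. is_cinf add A i"
  using J unfolding cone_with_joins_def by auto
lemma transl: "cInf add ((\<lambda>a. add v a) ` A) = add v (cInf add A)"
  using J unfolding cone_with_joins_def by auto

end

sublocale cwj \<subseteq> A: abel_semigroup add
  by unfold_locales (rule assoc, rule comm)

context cwj begin

lemmas ac = A.assoc A.commute A.left_commute

lemma zero_r: "add v zero = v" using zero_l comm by metis
lemma le_refl: "cle add v v" unfolding cle_def using zero_r by blast
lemma le_trans[trans]: "cle add a b \<Longrightarrow> cle add b c \<Longrightarrow> cle add a c"
  unfolding cle_def by (metis assoc)
lemma le_add: "cle add v (add v w)" unfolding cle_def by blast
lemma le_add2: "cle add w (add v w)" unfolding cle_def using comm by blast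
lemma zero_le: "cle add zero v" unfolding cle_def using zero_l by blast
lemma add_mono_r: "cle add p q \<Longrightarrow> cle add (add r p) (add r q)"
  unfolding cle_def by (metis assoc)
lemma add_mono_l: "cle add p q \<Longrightarrow> cle add (add p r) (add q r)"
  using add_mono_r comm by metis
lemma add_mono2: "cle add p q \<Longrightarrow> cle add p' q' \<Longrightarrow> cle add (add p p') (add q q')"
  using add_mono_r add_mono_l le_trans by metis

lemma cinf_unique: "is_cinf add A i \<Longrightarrow> is_cinf add A j \<Longrightarrow> i = j"
  unfolding is_cinf_def using antisym by blast
lemma cInf_is: "is_cinf add A (cInf add A)"
proof -
  obtain i where i: "is_cinf add A i" using infex by blast
  have "cInf add A = i" unfolding cInf_def using i cinf_unique by blast
  thus ?thesis using i by simp
qed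
lemma cInf_lower: "a \<in> A \<Longrightarrow> cle add (cInf add A) a"
  using cInf_is unfolding is_cinf_def by blast
lemma cInf_greatest: "(\<And>a. a \<in> A \<Longrightarrow> cle add u a) \<Longrightarrow> cle add u (cInf add A)"
  using cInf_is unfolding is_cinf_def by blast

lemma csup_unique: "is_csup add A i \<Longrightarrow> is_csup add A j \<Longrightarrow> i = j"
  unfolding is_csup_def using antisym by blast
lemma csup_ex: "is_csup add A (cInf add {u. \<forall>a\<in>A. cle add a u})"
  unfolding is_csup_def by (auto intro: cInf_greatest cInf_lower)
lemma cSup_is: "is_csup add A (cSup add A)"
proof -
  have "cSup add A = cInf add {u. \<forall>a\<in>A. cle add a u}"
    unfolding cSup_def using csup_ex csup_unique by blast
  thus ?thesis using csup_ex by simp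
qed
lemma cSup_upper: "a \<in> A \<Longrightarrow> cle add a (cSup add A)"
  using cSup_is unfolding is_csup_def by blast
lemma cSup_least: "(\<And>a. a \<in> A \<Longrightarrow> cle add a u) \<Longrightarrow> cle add (cSup add A) u"
  using cSup_is unfolding is_csup_def by blast

lemma cmeet_le1: "cle add (cmeet add x y) x" unfolding cmeet_def by (rule cInf_lower) simp
lemma cmeet_le2: "cle add (cmeet add x y) y" unfolding cmeet_def by (rule cInf_lower) simp
lemma cmeet_greatest: "cle add u x \<Longrightarrow> cle add u y \<Longrightarrow> cle add u (cmeet add x y)"
  unfolding cmeet_def by (rule cInf_greatest) auto
lemma cmeet_comm: "cmeet add x y = cmeet add y x" unfolding cmeet_def by (simp add: insert_commute)
lemma cmeet_idem: "cmeet add s s = s"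
  by (rule antisym) (auto intro: cmeet_le1 cmeet_greatest le_refl)
lemma add_cmeet: "add v (cmeet add x y) = cmeet add (add v x) (add v y)"
  unfolding cmeet_def using transl[of v "{x,y}"] by simp
lemma add_cmeet_r: "add (cmeet add x y) v = cmeet add (add x v) (add y v)"
  using add_cmeet comm by metis

lemma cjoin_ge1: "cle add x (cjoin add x y)" unfolding cjoin_def by (rule cSup_upper) simp
lemma cjoin_ge2: "cle add y (cjoin add x y)" unfolding cjoin_def by (rule cSup_upper) simp
lemma cjoin_least: "cle add x u \<Longrightarrow> cle add y u \<Longrightarrow> cle add (cjoin add x y) u"
  unfolding cjoin_def by (rule cSup_least) auto

lemma smul_mono: "0 \<le> l \<Longrightarrow> cle add p q \<Longrightarrow> cle add (smul l p) (smul l q)"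
  unfolding cle_def using smul_add by metis
lemma smul_mono_l: assumes "0 \<le> l" "l \<le> l'" shows "cle add (smul l p) (smul l' p)"
proof -
  have "smul l' p = smul (l + (l' - l)) p" by simp
  also have "\<dots> = add (smul l p) (smul (l' - l) p)" using assms smul_distr[of l "l' - l" p] by simp
  finally show ?thesis unfolding cle_def by metis
qed

end

context cwj begin

lemma eps_le: "0 < l \<Longrightarrow> cle add (ceps add smul v) (smul l v)"
  unfolding ceps_def by (rule cInf_lower) auto
lemma eps_greatest: "(\<And>l. 0 < l \<Longrightarrow> cle add u (smul l v)) \<Longrightarrow> cle add u (ceps add smul v)"
  unfolding ceps_def by (rule cInf_greatest) auto
lemma eps_le_self: "cle add (ceps add smul v) v"
  using eps_le[of 1 v] smul1 by simp
lemma eps_mono: "cle add p q \<Longrightarrow> cle add (ceps add smul p) (ceps add smul q)"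
  by (rule eps_greatest) (meson eps_le le_trans less_imp_le smul_mono)

lemma smul_eps_le: assumes "0 < m" shows "cle add (smul m (ceps add smul v)) (ceps add smul v)"
proof (rule eps_greatest)
  fix l :: real assume l: "0 < l"
  have "cle add (smul m (ceps add smul v)) (smul m (smul (l/m) v))"
    using assms l by (intro smul_mono eps_le) auto
  also have "smul m (smul (l/m) v) = smul l v" using assms l smul_smul by simp
  finally show "cle add (smul m (ceps add smul v)) (smul l v)" .
qed

lemma smul_eps: assumes "0 < m" shows "smul m (ceps add smul v) = ceps add smul v"
proof (rule antisym)
  show "cle add (smul m (ceps add smul v)) (ceps add smul v)" by (rule smul_eps_le[OF assms])
  have "ceps add smul v = smul m (smul (1/m) (ceps add smul v))"
    using assms smul_smul smul1 by simp
  also have "cle add \<dots> (smul m (ceps add smul v))"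
    using assms by (intro smul_mono smul_eps_le) auto
  finally show "cle add (ceps add smul v) (smul m (ceps add smul v))" .
qed

lemma eps_idem: "add (ceps add smul v) (ceps add smul v) = ceps add smul v"
proof -
  have "smul (1 + 1) (ceps add smul v) = ceps add smul v" using smul_eps[of 2] by simp
  thus ?thesis using smul_distr[of 1 1 "ceps add smul v"] smul1 by simp
qed

lemma add_eps: "add v (ceps add smul v) = v"
proof (rule antisym)
  show "cle add v (add v (ceps add smul v))" by (rule le_add)
  let ?b = "add v (ceps add smul v)"
  have "cle add x v" if xin: "x \<in> {smul e ?b | e. 0 \<le> e \<and> e < 1}" for x
  proof -
    obtain e where e: "x = smul e ?b" "0 \<le> e" "e < 1" using xin by blast
    show ?thesis
    proof (cases "e = 0")
      case True thus ?thesis using e smul0 zero_le by simp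
    next
      case False
      hence ep: "0 < e" using e by simp
      let ?l = "1/e - 1"
      have lp: "0 < ?l" using ep e by (simp add: field_simps)
      have "cle add ?b (add v (smul ?l v))" by (intro add_mono_r eps_le lp)
      also have "add v (smul ?l v) = smul (1 + ?l) v" using smul_distr[of 1 ?l v] lp smul1 by simp
      finally have "cle add x (smul e (smul (1 + ?l) v))" using e ep by (simp add: smul_mono)
      also have "smul e (smul (1 + ?l) v) = v" using ep lp smul_smul smul1 by simp
      finally show ?thesis .
    qed
  qed
  thus "cle add ?b v" using wsup[of ?b] unfolding is_csup_def by blast
qed

lemma inf_transl_ge:
  assumes "\<And>l. 0 < l \<Longrightarrow> cle add p (add q (smul l u))"
  shows "cle add p (add q (ceps add smul u))"
proof -
  have "cle add p (cInf add ((\<lambda>a. add q a) ` {smul l u | l. 0 < l}))"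
    by (rule cInf_greatest) (auto intro: assms)
  thus ?thesis using transl unfolding ceps_def by simp
qed

lemma cancel_n: assumes "cle add (add u p) (add u q)"
  shows "cle add (add (smul (real n) p) u) (add (smul (real n) q) u)"
proof (induction n)
  case 0 show ?case by (simp add: smul0 zero_l le_refl)
next
  case (Suc n)
  have e: "smul (real (Suc n)) r = add (smul (real n) r) r" for r
    using smul_distr[of "real n" 1 r] smul1 by (simp add: add.commute)
  have "add (smul (real (Suc n)) p) u = add p (add (smul (real n) p) u)" by (simp only: e) (simp add: ac)
  also have "cle add \<dots> (add p (add (smul (real n) q) u))" using add_mono_r Suc.IH by blast
  also have "\<dots> = add (smul (real n) q) (add u p)" by (simp add: ac)
  also have "cle add \<dots> (add (smul (real n) q) (add u q))" using assms add_mono_r by blast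
  also have "\<dots> = add (smul (real (Suc n)) q) u" by (simp only: e) (simp add: ac)
  finally show ?case .
qed

lemma cancel: assumes "cle add (add u p) (add u q)" shows "cle add p (add q (ceps add smul u))"
proof (rule inf_transl_ge)
  fix l :: real assume l: "0 < l"
  obtain n::nat where n: "1/l < real n" using reals_Archimedean2 by blast
  have np: "0 < real n" using n l by (smt (verit) divide_pos_pos)
  have kl: "1 / real n < l" using n l np by (simp add: field_simps)
  let ?k = "1 / real n"
  have "cle add (smul ?k (add (smul (real n) p) u)) (smul ?k (add (smul (real n) q) u))"
    using np by (intro smul_mono cancel_n[OF assms]) simp
  moreover have "smul ?k (add (smul (real n) r) u) = add r (smul ?k u)" for r
    using np smul_add smul_smul smul1 by simp
  ultimately have 1: "cle add (add p (smul ?k u)) (add q (smul ?k u))" by simp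
  have "cle add p (add p (smul ?k u))" by (rule le_add)
  also note 1
  also have "cle add (add q (smul ?k u)) (add q (smul l u))"
    using np kl by (intro add_mono_r smul_mono_l) auto
  finally show "cle add p (add q (smul l u))" .
qed

lemma eps_add_le: "cle add (ceps add smul (add u v)) (add (ceps add smul u) (ceps add smul v))"
proof -
  have "cle add (ceps add smul (add u v)) (add (smul l u) (ceps add smul v))" if l: "0 < l" for l
  proof (rule inf_transl_ge)
    fix m :: real assume m: "0 < m"
    let ?k = "min l m"
    have "cle add (ceps add smul (add u v)) (smul ?k (add u v))" using l m by (intro eps_le) simp
    also have "\<dots> = add (smul ?k u) (smul ?k v)" using l m smul_add by simp
    also have "cle add \<dots> (add (smul l u) (smul m v))"
      using l m by (intro add_mono2 smul_mono_l) auto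
    finally show "cle add (ceps add smul (add u v)) (add (smul l u) (smul m v))" .
  qed
  hence "cle add (ceps add smul (add u v)) (add (ceps add smul v) (smul l u))" if "0 < l" for l
    using that by (simp add: ac)
  hence "cle add (ceps add smul (add u v)) (add (ceps add smul v) (ceps add smul u))"
    by (rule inf_transl_ge)
  thus ?thesis by (simp add: ac)
qed

lemma add_sup: assumes "A \<noteq> {}"
  shows "cle add (add u (cSup add A)) (add (cSup add ((\<lambda>a. add u a) ` A)) (ceps add smul u))"
proof -
  let ?S = "cSup add ((\<lambda>a. add u a) ` A)"
  obtain a0 where a0: "a0 \<in> A" using assms by blast
  have "cle add u (add u a0)" by (rule le_add)
  also have "cle add (add u a0) ?S" using a0 by (intro cSup_upper) simp
  finally obtain r where r: "add u r = ?S" unfolding cle_def by blast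
  have "cle add a (add r (ceps add smul u))" if "a \<in> A" for a
    using that r by (intro cancel) (simp add: cSup_upper)
  hence "cle add (cSup add A) (add r (ceps add smul u))" by (rule cSup_least)
  hence "cle add (add u (cSup add A)) (add u (add r (ceps add smul u)))" by (rule add_mono_r)
  thus ?thesis by (simp add: r[symmetric] assoc)
qed

end

context cwj begin

lemma partA: "cle add (cmeet add (add x y) z) (add (cmeet add x z) (cmeet add y z))"
proof -
  let ?m = "cmeet add (add x y) z"
  let ?w = "cmeet add y z"
  have m1: "cle add ?m (add x y)" by (rule cmeet_le1)
  have m2: "cle add ?m z" by (rule cmeet_le2)
  have "cle add ?m (cmeet add (add x y) (add x z))"
    using m1 m2 le_add2 le_trans by (metis cmeet_greatest comm)
  moreover have "add ?w x = cmeet add (add x y) (add x z)" using add_cmeet[of x y z] comm by metis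
  ultimately have 1: "cle add ?m (add ?w x)" by simp
  have "cle add ?m (cmeet add (add z y) (add z z))"
    using m2 le_add le_trans by (metis cmeet_greatest)
  moreover have "add ?w z = cmeet add (add z y) (add z z)" using add_cmeet[of z y z] comm by metis
  ultimately have 2: "cle add ?m (add ?w z)" by simp
  have "cle add ?m (cmeet add (add ?w x) (add ?w z))" using 1 2 by (rule cmeet_greatest)
  moreover have "add (cmeet add x z) ?w = cmeet add (add ?w x) (add ?w z)"
    using add_cmeet[of ?w x z] comm by metis
  ultimately show ?thesis by simp
qed

lemma partB: assumes s: "add x y = add z w"
  shows "add x y = add (cjoin add x z) (cmeet add y w)"
proof (rule antisym)
  let ?a = "cmeet add y w"
  obtain c where c: "add ?a c = y" using cmeet_le1 unfolding cle_def by blast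
  obtain d where d: "add ?a d = w" using cmeet_le2 unfolding cle_def by blast
  let ?e = "ceps add smul ?a"
  have ae: "add ?a ?e = ?a" by (rule add_eps)
  let ?t = "cmeet add (add x (add c ?e)) (add z (add d ?e))"
  have t1: "add ?a (add x (add c ?e)) = add x y"
  proof -
    have "add ?a (add x (add c ?e)) = add x (add c (add ?a ?e))" by (simp add: ac)
    also have "\<dots> = add x (add c ?a)" using ae by simp
    also have "\<dots> = add x y" using c comm by metis
    finally show ?thesis .
  qed
  have t2: "add ?a (add z (add d ?e)) = add x y"
  proof -
    have "add ?a (add z (add d ?e)) = add z (add d (add ?a ?e))" by (simp add: ac)
    also have "\<dots> = add z w" using ae d by (simp add: ac)
    finally show ?thesis using s by simp
  qed
  have ta: "add ?t ?a = add x y"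
    using t1 t2 by (simp add: add_cmeet comm cmeet_idem)
  have "cle add x (add z (add d ?e))"
  proof -
    have "cle add (add ?a x) (add (add ?a x) c)" by (rule le_add)
    also have "add (add ?a x) c = add x (add ?a c)" by (simp add: ac)
    also have "\<dots> = add x y" using c by simp
    also have "\<dots> = add z (add ?a d)" using s d by simp
    also have "\<dots> = add ?a (add z d)" by (simp add: ac)
    finally have "cle add x (add (add z d) ?e)" by (rule cancel)
    thus ?thesis by (simp add: assoc)
  qed
  hence xt: "cle add x ?t" by (intro cmeet_greatest le_add)
  have "cle add z (add x (add c ?e))"
  proof -
    have "cle add (add ?a z) (add (add ?a z) d)" by (rule le_add)
    also have "add (add ?a z) d = add z (add ?a d)" by (simp add: ac)
    also have "\<dots> = add x (add ?a c)" using s c d by simp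
    also have "\<dots> = add ?a (add x c)" by (simp add: ac)
    finally have "cle add z (add (add x c) ?e)" by (rule cancel)
    thus ?thesis by (simp add: assoc)
  qed
  hence zt: "cle add z ?t" by (intro cmeet_greatest le_add)
  have "cle add (add (cjoin add x z) ?a) (add ?t ?a)"
    using xt zt by (intro add_mono_l cjoin_least)
  thus "cle add (add (cjoin add x z) ?a) (add x y)" using ta by simp
  have "cle add (add x y) (add (cjoin add x z) y)" by (intro add_mono_l cjoin_ge1)
  moreover have "cle add (add x y) (add (cjoin add x z) w)"
    using s by (simp add: add_mono_l cjoin_ge2)
  ultimately have "cle add (add x y) (cmeet add (add (cjoin add x z) y) (add (cjoin add x z) w))"
    by (rule cmeet_greatest)
  thus "cle add (add x y) (add (cjoin add x z) ?a)" by (simp add: add_cmeet)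
qed

lemma partB2: "add x y = add (cjoin add x y) (cmeet add x y)"
  using partB[of x y y x] comm cmeet_comm by metis

lemma partC1: "cle add (cSup add ((\<lambda>i. cmeet add (x i) y) ` I)) (cmeet add (cSup add (x ` I)) y)"
proof (rule cSup_least)
  fix a assume "a \<in> (\<lambda>i. cmeet add (x i) y) ` I"
  then obtain i where i: "i \<in> I" "a = cmeet add (x i) y" by blast
  have "cle add (x i) (cSup add (x ` I))" using i by (intro cSup_upper) simp
  thus "cle add a (cmeet add (cSup add (x ` I)) y)" using i
    by (meson cmeet_greatest cmeet_le1 cmeet_le2 le_trans)
qed

lemma partC2: "cle add (cmeet add (cSup add (x ` I)) y)
          (add (cSup add ((\<lambda>i. cmeet add (x i) y) ` I)) (ceps add smul (cjoin add y (cSup add (x ` I)))))"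
proof (cases "I = {}")
  case True
  have "cle add (cmeet add (cSup add (x ` I)) y) (cSup add (x ` I))" by (rule cmeet_le1)
  also have "cle add (cSup add (x ` I)) u" for u using True by (intro cSup_least) simp
  finally show ?thesis .
next
  case False
  let ?X = "cSup add (x ` I)"
  let ?m = "cSup add ((\<lambda>i. cmeet add (x i) y) ` I)"
  let ?J = "cjoin add y ?X"
  have each: "cle add (add y (x i)) (add ?J ?m)" if i: "i \<in> I" for i
  proof -
    have xi: "cle add (x i) ?X" using i by (intro cSup_upper) simp
    have "add y (x i) = add (cjoin add y (x i)) (cmeet add y (x i))" by (rule partB2)
    also have "cle add \<dots> (add ?J ?m)"
    proof (rule add_mono2)
      show "cle add (cjoin add y (x i)) ?J"
        using xi by (meson cjoin_ge1 cjoin_ge2 cjoin_least le_trans)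
      show "cle add (cmeet add y (x i)) ?m"
        using i by (simp add: cmeet_comm cSup_upper)
    qed
    finally show ?thesis .
  qed
  have "cle add (add y ?X) (add (cSup add ((\<lambda>a. add y a) ` (x ` I))) (ceps add smul y))"
    using False by (intro add_sup) simp
  also have "cle add \<dots> (add (add ?J ?m) (ceps add smul y))"
    using each by (intro add_mono_l cSup_least) auto
  finally have 1: "cle add (add y ?X) (add (add ?J ?m) (ceps add smul y))" .
  have "add y ?X = add ?J (cmeet add ?X y)" using partB2 cmeet_comm by metis
  with 1 have "cle add (add ?J (cmeet add ?X y)) (add ?J (add ?m (ceps add smul y)))"
    by (simp add: assoc)
  hence 2: "cle add (cmeet add ?X y) (add (add ?m (ceps add smul y)) (ceps add smul ?J))"
    by (rule cancel)
  have "cle add (ceps add smul y) (ceps add smul ?J)" by (intro eps_mono cjoin_ge1)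
  hence "cle add (add (ceps add smul y) (ceps add smul ?J)) (add (ceps add smul ?J) (ceps add smul ?J))"
    by (rule add_mono_l)
  hence "cle add (add (ceps add smul y) (ceps add smul ?J)) (ceps add smul ?J)"
    by (simp add: eps_idem)
  hence "cle add (add (add ?m (ceps add smul y)) (ceps add smul ?J)) (add ?m (ceps add smul ?J))"
    by (simp add: assoc add_mono_r)
  with 2 show ?thesis by (rule le_trans)
qed

lemma cancel_eq: assumes "add u p = add u q" "cle add (ceps add smul u) e" "add e e = e"
  shows "add p e = add q e"
proof -
  have gen: "cle add (add p e) (add q e)" if "add u p = add u q" for p q
  proof -
    have "cle add p (add q (ceps add smul u))" using that by (intro cancel) (simp add: le_refl)
    hence "cle add (add p e) (add (add q (ceps add smul u)) e)" by (rule add_mono_l)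
    also have "cle add \<dots> (add (add q e) e)" using assms(2) by (intro add_mono_l add_mono_r)
    also have "\<dots> = add q e" using assms(3) by (simp add: assoc)
    finally show ?thesis .
  qed
  show ?thesis using gen[OF assms(1)] gen[OF assms(1)[symmetric]] by (rule antisym)
qed

lemma absorb: assumes "cle add w (add v1 v2)"
  shows "add (add v2 (ceps add smul v1)) (ceps add smul w) = add v2 (ceps add smul v1)"
proof (rule antisym)
  show "cle add (add v2 (ceps add smul v1)) (add (add v2 (ceps add smul v1)) (ceps add smul w))"
    by (rule le_add)
  have "cle add (ceps add smul w) (add (ceps add smul v1) (ceps add smul v2))"
    using assms eps_mono eps_add_le le_trans by blast
  hence "cle add (add (add v2 (ceps add smul v1)) (ceps add smul w))
     (add (add v2 (ceps add smul v1)) (add (ceps add smul v1) (ceps add smul v2)))"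
    by (rule add_mono_r)
  also have "\<dots> = add (add v2 (ceps add smul v2)) (add (ceps add smul v1) (ceps add smul v1))"
    by (simp add: ac)
  also have "\<dots> = add v2 (ceps add smul v1)" by (simp add: add_eps eps_idem)
  finally show "cle add (add (add v2 (ceps add smul v1)) (ceps add smul w)) (add v2 (ceps add smul v1))" .
qed

lemma partD: assumes s: "add v1 v2 = add w1 w2"
  shows "\<exists>z11 z12 z21 z22. add z11 z12 = v1 \<and> add z21 z22 = add v2 (ceps add smul v1)
           \<and> add z11 z21 = w1 \<and> add z12 z22 = add w2 (ceps add smul w1)"
proof -
  let ?a = "cmeet add v1 w1"
  let ?b = "cmeet add v2 w2"
  let ?e1 = "ceps add smul v1"
  let ?f1 = "ceps add smul w1"
  obtain z12 where z12: "add ?a z12 = v1" using cmeet_le1 unfolding cle_def by blast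
  obtain z21 where z21: "add ?a z21 = w1" using cmeet_le2 unfolding cle_def by blast
  have F1: "add v1 v2 = add (cjoin add v1 w1) ?b" using partB[OF s] .
  have F2: "add v1 w1 = add (cjoin add v1 w1) ?a" by (rule partB2)
  have key: "add (add v1 w1) ?b = add ?a (add v1 v2)"
  proof -
    have "add (add v1 w1) ?b = add (add (cjoin add v1 w1) ?a) ?b" by (simp only: F2)
    also have "\<dots> = add ?a (add (cjoin add v1 w1) ?b)" by (simp add: ac)
    also have "\<dots> = add ?a (add v1 v2)" by (simp only: F1)
    finally show ?thesis .
  qed
  have ea: "cle add (ceps add smul ?a) (ceps add smul v1)" by (intro eps_mono cmeet_le1)
  have eb: "cle add (ceps add smul ?a) (ceps add smul w1)" by (intro eps_mono cmeet_le2)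
  have P: "add (add z21 ?b) ?e1 = add v2 ?e1"
  proof (rule cancel_eq)
    show "add (add v1 ?a) (add z21 ?b) = add (add v1 ?a) v2"
    proof -
      have "add (add v1 ?a) (add z21 ?b) = add (add v1 (add ?a z21)) ?b" by (simp add: ac)
      also have "\<dots> = add (add v1 w1) ?b" using z21 by simp
      also have "\<dots> = add ?a (add v1 v2)" by (rule key)
      also have "\<dots> = add (add v1 ?a) v2" by (simp add: ac)
      finally show ?thesis .
    qed
    have "cle add (ceps add smul (add v1 ?a)) (add ?e1 (ceps add smul ?a))" by (rule eps_add_le)
    also have "cle add \<dots> (add ?e1 ?e1)" using ea by (rule add_mono_r)
    finally show "cle add (ceps add smul (add v1 ?a)) ?e1" by (simp add: eps_idem)
    show "add ?e1 ?e1 = ?e1" by (rule eps_idem)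
  qed
  have Q: "add (add z12 ?b) ?f1 = add w2 ?f1"
  proof (rule cancel_eq)
    show "add (add w1 ?a) (add z12 ?b) = add (add w1 ?a) w2"
    proof -
      have "add (add w1 ?a) (add z12 ?b) = add (add w1 (add ?a z12)) ?b" by (simp add: ac)
      also have "\<dots> = add (add v1 w1) ?b" using z12 by (simp add: comm)
      also have "\<dots> = add ?a (add v1 v2)" by (rule key)
      also have "\<dots> = add ?a (add w1 w2)" by (simp only: s)
      also have "\<dots> = add (add w1 ?a) w2" by (simp add: ac)
      finally show ?thesis .
    qed
    have "cle add (ceps add smul (add w1 ?a)) (add ?f1 (ceps add smul ?a))" by (rule eps_add_le)
    also have "cle add \<dots> (add ?f1 ?f1)" using eb by (rule add_mono_r)
    finally show "cle add (ceps add smul (add w1 ?a)) ?f1" by (simp add: eps_idem)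
    show "add ?f1 ?f1 = ?f1" by (rule eps_idem)
  qed
  have A1: "add (add v2 ?e1) ?f1 = add v2 ?e1"
    using s by (intro absorb) (metis le_add)
  have A2: "add (add w2 ?f1) ?e1 = add w2 ?f1"
    using s by (intro absorb) (metis le_add)
  let ?z22 = "add ?b (add ?e1 ?f1)"
  have "add z21 ?z22 = add (add (add z21 ?b) ?e1) ?f1" by (simp add: ac)
  hence r2: "add z21 ?z22 = add v2 ?e1" using P A1 by simp
  have "add z12 ?z22 = add (add (add z12 ?b) ?f1) ?e1" by (simp add: ac)
  hence r4: "add z12 ?z22 = add w2 ?f1" using Q A2 by simp
  show ?thesis using z12 z21 r2 r4 by blast
qed

lemma partE: assumes s: "add v1 v2 = add w1 w2"
  shows "\<exists>z11 z12 z21 z22. add z11 z12 = v1 \<and> add z21 z22 = v2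
           \<and> cle add w1 (add (add z11 z21) (ceps add smul w2))
           \<and> cle add w2 (add (add z12 z22) (ceps add smul w1))"
proof -
  let ?a = "cmeet add v1 w1"
  obtain z12 where z12: "add ?a z12 = v1" using cmeet_le1 unfolding cle_def by blast
  obtain c where c: "add ?a c = w1" using cmeet_le2 unfolding cle_def by blast
  let ?z21 = "cmeet add v2 c"
  obtain z22 where z22: "add ?z21 z22 = v2" using cmeet_le1 unfolding cle_def by blast
  have az: "add ?a ?z21 = cmeet add (add ?a v2) w1" using c by (simp add: add_cmeet)
  have "add v2 v1 = add w2 w1" using s by (simp add: comm)
  hence "add w2 w1 = add (cjoin add v2 w2) ?a" using partB by metis
  also have "cle add \<dots> (add (add v2 w2) ?a)"
    by (intro add_mono_l cjoin_least le_add le_add2)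
  also have "\<dots> = add w2 (add ?a v2)" by (simp add: ac)
  finally have "cle add w1 (add (add ?a v2) (ceps add smul w2))" by (rule cancel)
  moreover have "cle add w1 (add w1 (ceps add smul w2))" by (rule le_add)
  ultimately have "cle add w1 (cmeet add (add (add ?a v2) (ceps add smul w2)) (add w1 (ceps add smul w2)))"
    by (rule cmeet_greatest)
  hence r3: "cle add w1 (add (add ?a ?z21) (ceps add smul w2))" using az by (simp add: add_cmeet_r)
  have "add w1 w2 = add (add ?a z12) (add ?z21 z22)" using s z12 z22 by simp
  also have "\<dots> = add (add ?a ?z21) (add z12 z22)" by (simp add: ac)
  also have "cle add \<dots> (add w1 (add z12 z22))"
  proof (rule add_mono_l)
    have "cle add (add ?a ?z21) (add ?a c)" by (intro add_mono_r cmeet_le2)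
    thus "cle add (add ?a ?z21) w1" using c by simp
  qed
  finally have r4: "cle add w2 (add (add z12 z22) (ceps add smul w1))" by (rule cancel)
  show ?thesis using z12 z22 r3 r4 by blast
qed

end


theorem mainTheorem10:
  fixes add :: "'a \<Rightarrow> 'a \<Rightarrow> 'a" and zero :: 'a and smul :: "real \<Rightarrow> 'a \<Rightarrow> 'a"
  assumes J: "cone_with_joins add zero smul"
  shows
    "(\<forall>x y z. cle add (cmeet add (add x y) z) (add (cmeet add x z) (cmeet add y z)))
   \<and> (\<forall>x y z w. add x y = add z w \<longrightarrow> add x y = add (cjoin add x z) (cmeet add y w))
   \<and> (\<forall>x y. add x y = add (cjoin add x y) (cmeet add x y))
   \<and> (\<forall>(I :: 'i set) (x :: 'i \<Rightarrow> 'a) y.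
        cle add (cSup add ((\<lambda>i. cmeet add (x i) y) ` I)) (cmeet add (cSup add (x ` I)) y)
      \<and> cle add (cmeet add (cSup add (x ` I)) y)
          (add (cSup add ((\<lambda>i. cmeet add (x i) y) ` I)) (ceps add smul (cjoin add y (cSup add (x ` I))))))
   \<and> (\<forall>v1 v2 w1 w2. add v1 v2 = add w1 w2 \<longrightarrow>
        (\<exists>z11 z12 z21 z22. add z11 z12 = v1 \<and> add z21 z22 = add v2 (ceps add smul v1)
           \<and> add z11 z21 = w1 \<and> add z12 z22 = add w2 (ceps add smul w1)))
   \<and> (\<forall>v1 v2 w1 w2. add v1 v2 = add w1 w2 \<longrightarrow>
        (\<exists>z11 z12 z21 z22. add z11 z12 = v1 \<and> add z21 z22 = v2
           \<and> cle add w1 (add (add z11 z21) (ceps add smul w2))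
           \<and> cle add w2 (add (add z12 z22) (ceps add smul w1))))"
  proof -
  interpret cwj add zero smul using J by (rule cwj.intro)
  show ?thesis using partA partB partB2 partC1 partC2 partD partE by blast
qed

end
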